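(* Let $X=S^1=\mathbb R/\mathbb Z$ with the arc-length metric, let $T x=2x \bmod 1$ be the doubling map, let $N=3$ and consider the rigid interaction $\gamma=0$. Then for every sufficiently small $\varepsilon>0$ the CML $T_\varepsilon$ exhibits desynchronization on a set of initial configurations of positive Lebesgue measure in $(S^1)^3$ (containing a nonempty open set).
   Context: For $\bar x=(x_1,x_2,x_3)$, $J_i(\bar x)=\{j:\rho(x_i,x_j)\le\varepsilon\}$, $(\bar Q_\varepsilon\bar x)_i=\frac1{|J_i(\bar x)|}\sum_{j\in J_i(\bar x)}x_j$ (center of gravity, computed in a local lift since particles are close), and $T_\varepsilon=\bar T\circ\bar Q_\varepsilon$ with $\bar T(\bar x)=(Tx_1,Tx_2,Tx_3)$. Writing $\bar x^t=T^t_\varepsilon\bar x$, desynchronization for $\bar x$ means $\liminf_{t\to\infty}\max_{i,j}\rho(x_i^t,x_j^t)>0$. *)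

theory Defs
  imports "HOL-Analysis.Analysis" "HOL-Library.Numeral_Type"
begin

text \<open>Points of S^1 = R/Z are represented by real lifts; configurations of N = 3
  particles by vectors in real^3 (index type 3), read modulo Z^3.\<close>

definition circ_dist :: "real \<Rightarrow> real \<Rightarrow> real" where
  "circ_dist x y = min (frac (x - y)) (1 - frac (x - y))"

definition doubling :: "real \<Rightarrow> real" where
  "doubling x = frac (2 * x)"

definition sdisp :: "real \<Rightarrow> real \<Rightarrow> real" where
  "sdisp a b = (b - a) - of_int (round (b - a))"

definition Jset :: "real \<Rightarrow> real^3 \<Rightarrow> 3 \<Rightarrow> 3 set" where
  "Jset \<epsilon> x i = {j. circ_dist (x $ i) (x $ j) \<le> \<epsilon>}"

text \<open>Rigid (gamma = 0) interaction: centre of gravity of the particles within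
  distance epsilon, computed in the local lift around x_i.\<close>
definition Qbar :: "real \<Rightarrow> real^3 \<Rightarrow> real^3" where
  "Qbar \<epsilon> x = (\<chi> i. x $ i + (\<Sum>j\<in>Jset \<epsilon> x i. sdisp (x $ i) (x $ j)) / real (card (Jset \<epsilon> x i)))"

definition CML :: "real \<Rightarrow> real^3 \<Rightarrow> real^3" where
  "CML \<epsilon> x = (\<chi> i. doubling (Qbar \<epsilon> x $ i))"

definition max_spread :: "real^3 \<Rightarrow> real" where
  "max_spread x = Max ((\<lambda>(i, j). circ_dist (x $ i) (x $ j)) ` (UNIV :: (3 \<times> 3) set))"

definition desynchronizes :: "real \<Rightarrow> real^3 \<Rightarrow> bool" where
  "desynchronizes \<epsilon> x \<longleftrightarrow> liminf (\<lambda>t. ereal (max_spread ((CML \<epsilon> ^^ t) x))) > 0"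

end

theory Submission imports Defs begin

lemma cd_eq:
  assumes "x - y - d = of_int k" "\<bar>d\<bar> \<le> 1/2"
  shows "circ_dist x y = \<bar>d\<bar>"
proof (cases "d \<ge> 0")
  case True
  have "frac (x - y) = d" unfolding frac_unique_iff using assms True by simp
  then show ?thesis using assms True unfolding circ_dist_def by (simp add: min_def)
next
  case False
  have "frac (x - y) = 1 + d" unfolding frac_unique_iff using assms False
    by (auto simp: algebra_simps)
  then show ?thesis using assms False unfolding circ_dist_def by (simp add: min_def)
qed

lemma sd_eq:
  assumes "b - a - d = of_int k" "\<bar>d\<bar> < 1/2"
  shows "sdisp a b = d"
proof -
  have "round (b - a) = k"
    using assms by (simp add: round_def floor_eq_iff algebra_simps) linarith
  then show ?thesis using assms unfolding sdisp_def by simp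
qed

lemma sd_int: "\<exists>k. b - a = sdisp a b + of_int k"
  unfolding sdisp_def by (rule exI[of _ "round (b - a)"]) simp

lemma frac_int: "\<exists>k. frac y = y + of_int k"
  unfolding frac_def by (rule exI[of _ "- floor y"]) simp

definition Inv :: "real \<Rightarrow> real^3 \<Rightarrow> bool" where
  "Inv \<epsilon> x \<longleftrightarrow> 0 < sdisp (x$1) (x$2) \<and> sdisp (x$1) (x$2) < \<epsilon> \<and>
     0 < sdisp (x$2) (x$3) \<and> sdisp (x$2) (x$3) < \<epsilon> \<and> \<epsilon> < sdisp (x$1) (x$2) + sdisp (x$2) (x$3)"

lemma step:
  assumes e: "0 < \<epsilon>" "\<epsilon> < 1/8" and I: "Inv \<epsilon> x"
  shows "Inv \<epsilon> (CML \<epsilon> x)"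
proof -
  define u where "u = sdisp (x$1) (x$2)"
  define v where "v = sdisp (x$2) (x$3)"
  have uv: "0 < u" "u < \<epsilon>" "0 < v" "v < \<epsilon>" "\<epsilon> < u + v"
    using I unfolding Inv_def u_def v_def by auto
  obtain k1 where k1: "x$2 - x$1 = u + of_int k1" using sd_int u_def by blast
  obtain k2 where k2: "x$3 - x$2 = v + of_int k2" using sd_int v_def by blast
  have c11: "circ_dist (x$i) (x$i) = 0" for i
    using cd_eq[of "x$i" "x$i" 0 0] by simp
  have c12: "circ_dist (x$1) (x$2) = u" using cd_eq[of "x$1" "x$2" "-u" "-k1"] k1 uv e by auto
  have c21: "circ_dist (x$2) (x$1) = u" using cd_eq[of "x$2" "x$1" "u" "k1"] k1 uv e by auto
  have c23: "circ_dist (x$2) (x$3) = v" using cd_eq[of "x$2" "x$3" "-v" "-k2"] k2 uv e by auto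
  have c32: "circ_dist (x$3) (x$2) = v" using cd_eq[of "x$3" "x$2" "v" "k2"] k2 uv e by auto
  have c13: "circ_dist (x$1) (x$3) = u+v" using cd_eq[of "x$1" "x$3" "-(u+v)" "-k1-k2"] k1 k2 uv e by auto
  have c31: "circ_dist (x$3) (x$1) = u+v" using cd_eq[of "x$3" "x$1" "u+v" "k1+k2"] k1 k2 uv e by auto
  have s11: "sdisp (x$i) (x$i) = 0" for i using sd_eq[of "x$i" "x$i" 0 0] by simp
  have s21: "sdisp (x$2) (x$1) = -u" using sd_eq[of "x$1" "x$2" "-u" "-k1"] k1 uv e by auto
  have s32: "sdisp (x$3) (x$2) = -v" using sd_eq[of "x$2" "x$3" "-v" "-k2"] k2 uv e by auto
  have J1: "Jset \<epsilon> x 1 = {1,2}"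
    unfolding Jset_def set_eq_iff mem_Collect_eq forall_3 using c11 c12 c13 uv by simp
  have J2: "Jset \<epsilon> x 2 = {1,2,3}"
    unfolding Jset_def set_eq_iff mem_Collect_eq forall_3 using c11 c21 c23 uv by simp
  have J3: "Jset \<epsilon> x 3 = {2,3}"
    unfolding Jset_def set_eq_iff mem_Collect_eq forall_3 using c11 c31 c32 uv by simp
  have Q1: "Qbar \<epsilon> x $ 1 = x$1 + u/2"
    using s11 u_def by (simp add: Qbar_def J1)
  have Q2: "Qbar \<epsilon> x $ 2 = x$2 + (v-u)/3"
    using s11 s21 v_def by (simp add: Qbar_def J2 u_def)
  have Q3: "Qbar \<epsilon> x $ 3 = x$3 - v/2"
    using s11 s32 by (simp add: Qbar_def J3)
  obtain m1 where m1: "CML \<epsilon> x $ 1 = 2 * (x$1 + u/2) + of_int m1"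
    unfolding CML_def doubling_def using Q1 frac_int by fastforce
  obtain m2 where m2: "CML \<epsilon> x $ 2 = 2 * (x$2 + (v-u)/3) + of_int m2"
    unfolding CML_def doubling_def using Q2 frac_int by fastforce
  obtain m3 where m3: "CML \<epsilon> x $ 3 = 2 * (x$3 - v/2) + of_int m3"
    unfolding CML_def doubling_def using Q3 frac_int by fastforce
  have n1: "sdisp (CML \<epsilon> x $ 1) (CML \<epsilon> x $ 2) = (u + 2 * v) / 3"
    apply (rule sd_eq[where k="m2 - m1 + 2*k1"])
    using m1 m2 k1 uv e by (auto simp: field_simps)
  have n2: "sdisp (CML \<epsilon> x $ 2) (CML \<epsilon> x $ 3) = (2 * u + v) / 3"
    apply (rule sd_eq[where k="m3 - m2 + 2*k2"])
    using m3 m2 k2 uv e by (auto simp: field_simps)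
  show ?thesis unfolding Inv_def n1 n2 using uv by (auto simp: field_simps)
qed

lemma spread:
  assumes e: "0 < \<epsilon>" "\<epsilon> < 1/8" and I: "Inv \<epsilon> x"
  shows "\<epsilon> < max_spread x"
proof -
  define u where "u = sdisp (x$1) (x$2)"
  define v where "v = sdisp (x$2) (x$3)"
  have uv: "0 < u" "u < \<epsilon>" "0 < v" "v < \<epsilon>" "\<epsilon> < u + v"
    using I unfolding Inv_def u_def v_def by auto
  obtain k1 where k1: "x$2 - x$1 = u + of_int k1" using sd_int u_def by blast
  obtain k2 where k2: "x$3 - x$2 = v + of_int k2" using sd_int v_def by blast
  have c13: "circ_dist (x$1) (x$3) = u+v" using cd_eq[of "x$1" "x$3" "-(u+v)" "-k1-k2"] k1 k2 uv e by auto
  have "circ_dist (x$1) (x$3) \<le> max_spread x"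
    unfolding max_spread_def by (rule Max_ge) (auto intro!: image_eqI[where x="(1,3)"])
  then show ?thesis using c13 uv by simp
qed

theorem lemma3:
  shows "\<exists>\<epsilon>0>0. \<forall>\<epsilon>. 0 < \<epsilon> \<and> \<epsilon> < \<epsilon>0 \<longrightarrow>
           (\<exists>U :: (real^3) set. open U \<and> U \<noteq> {} \<and> (\<forall>x\<in>U. desynchronizes \<epsilon> x))"
proof (intro exI[of _ "1/8"] conjI allI impI)
  fix \<epsilon> :: real assume "0 < \<epsilon> \<and> \<epsilon> < 1/8"
  then have e: "0 < \<epsilon>" "\<epsilon> < 1/8" by auto
  define c :: "real^3" where "c = vector [0, 3*\<epsilon>/4, 3*\<epsilon>/2]"
  have c: "c$1 = 0" "c$2 = 3*\<epsilon>/4" "c$3 = 3*\<epsilon>/2" unfolding c_def by simp_all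
  have inv: "Inv \<epsilon> x" if "x \<in> ball c (\<epsilon>/16)" for x
  proof -
    have d: "\<bar>x$i - c$i\<bar> < \<epsilon>/16" for i
    proof -
      have "\<bar>(x - c)$i\<bar> \<le> norm (x - c)" by (rule component_le_norm_cart)
      also have "\<dots> < \<epsilon>/16" using that by (simp add: dist_norm norm_minus_commute)
      finally show ?thesis by simp
    qed
    have d1: "\<bar>x$1\<bar> < \<epsilon>/16" using d[of 1] c by simp
    have d2: "\<bar>x$2 - 3*\<epsilon>/4\<bar> < \<epsilon>/16" using d[of 2] c by simp
    have d3: "\<bar>x$3 - 3*\<epsilon>/2\<bar> < \<epsilon>/16" using d[of 3] c by simp
    have s1: "sdisp (x$1) (x$2) = x$2 - x$1"
      using d1 d2 e by (intro sd_eq[where k=0]) (simp, arith)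
    have s2: "sdisp (x$2) (x$3) = x$3 - x$2"
      using d3 d2 e by (intro sd_eq[where k=0]) (simp, arith)
    show ?thesis using d1 d2 d3 e by (simp only: Inv_def s1 s2) arith
  qed
  show "\<exists>U :: (real^3) set. open U \<and> U \<noteq> {} \<and> (\<forall>x\<in>U. desynchronizes \<epsilon> x)"
  proof (intro exI[of _ "ball c (\<epsilon>/16)"] conjI ballI)
    show "open (ball c (\<epsilon>/16))" by simp
    show "ball c (\<epsilon>/16) \<noteq> {}" using e by simp
    fix x assume x: "x \<in> ball c (\<epsilon>/16)"
    have it: "Inv \<epsilon> ((CML \<epsilon> ^^ t) x)" for t
      by (induction t) (use inv[OF x] step[OF e] in auto)
    have "ereal \<epsilon> \<le> liminf (\<lambda>t. ereal (max_spread ((CML \<epsilon> ^^ t) x)))"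
      by (rule Liminf_bounded) (use spread[OF e it] in \<open>auto intro!: always_eventually less_imp_le\<close>)
    then show "desynchronizes \<epsilon> x" unfolding desynchronizes_def using e
      by (meson ereal_less(2) less_le_trans)
  qed
qed simp

end
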